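(* Let $f(\lambda)=C\,|\lambda|^{-2\alpha}(1+\lambda^2)^{-\beta}$, $\lambda\in\mathbb{R}$, with $0<C<\infty$, $0<\alpha<1/2$ and $\beta>1/2$, and let $r(t):=\int_{\mathbb{R}}e^{i\lambda t}f(\lambda)\,d\lambda$. Then $$r(t)=t^{2\alpha-1}\cdot\frac{\pi C}{\cos(\pi\alpha)\Gamma(2\alpha)}\,(1+o(1))\qquad\text{as }t\to\infty.$$ *)

theory Defs
  imports "HOL-Analysis.Analysis" "HOL-Library.Landau_Symbols"
begin

definition spec_dens :: "real \<Rightarrow> real \<Rightarrow> real \<Rightarrow> real \<Rightarrow> real" where
  "spec_dens C \<alpha> \<beta> x = C * \<bar>x\<bar> powr (-2 * \<alpha>) * (1 + x\<^sup>2) powr (-\<beta>)"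

definition cov_fun :: "real \<Rightarrow> real \<Rightarrow> real \<Rightarrow> real \<Rightarrow> complex" where
  "cov_fun C \<alpha> \<beta> t = (\<integral>x. exp (\<i> * complex_of_real (x * t)) * complex_of_real (spec_dens C \<alpha> \<beta> x) \<partial>lborel)"

end

theory Submission
  imports Defs "HOL-Probability.Characteristic_Functions"
begin
(* Proof of Lemma 4.2 via Gaussian subordination. *)


lemma hi_lborel:
  fixes f :: "real \<Rightarrow> real"
  assumes I: "(f has_integral I) S" and nn: "\<And>x. x \<in> S \<Longrightarrow> 0 \<le> f x"
    and [measurable]: "S \<in> sets borel" "f \<in> borel_measurable borel"
  shows "has_bochner_integral lborel (\<lambda>x. indicator S x * f x) I"
proof -
  have N: "integral\<^sup>N lborel (\<lambda>x. indicator S x * f x) = I"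
    using nn_integral_has_integral_lebesgue[OF nn I] by simp
  have "0 \<le> I" using has_integral_nonneg[OF I nn] by simp
  show ?thesis
    by (rule has_bochner_integral_nn_integral) (use N \<open>0 \<le> I\<close> nn in \<open>auto simp: indicator_def\<close>)
qed

lemma gamma_lborel:
  fixes p s :: real assumes p: "p > 0" and s: "s > 0"
  shows "has_bochner_integral lborel (\<lambda>a. indicator {0<..} a * (a powr (p-1) * exp (-(s*a)))) (Gamma p * s powr (-p))"
proof -
  define g where "g = (\<lambda>x::real. indicator {0<..} x * (x powr (p-1) / exp x))"
  have "has_bochner_integral lborel (\<lambda>x. indicator {0..} x * (x powr (p-1) / exp x)) (Gamma p)"
    by (rule hi_lborel[OF Gamma_integral_real[OF p]]) auto
  moreover have "(\<lambda>x. indicator {0..} x * (x powr (p-1) / exp x)) = g"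
    unfolding g_def by (auto simp: indicator_def fun_eq_iff)
  ultimately have G: "has_bochner_integral lborel g (Gamma p)" by simp
  hence gi: "integrable lborel g" "integral\<^sup>L lborel g = Gamma p"
    by (auto simp: has_bochner_integral_iff)
  have eq: "g (0 + s*a) = s powr (p-1) * (indicator {0<..} a * (a powr (p-1) * exp (-(s*a))))" for a
    using s by (auto simp: g_def indicator_def powr_mult exp_minus field_simps zero_less_mult_iff)
  have int: "integrable lborel (\<lambda>a. g (0 + s*a))"
    using lborel_integrable_real_affine[OF gi(1), of s 0] s by simp
  have int2: "integrable lborel (\<lambda>a. indicator {0<..} a * (a powr (p-1) * exp (-(s*a))))"
  proof -
    have eqf: "(\<lambda>a. s powr (1-p) * g (0 + s*a)) = (\<lambda>a. indicator {0<..} a * (a powr (p-1) * exp (-(s*a))))"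
      using s unfolding eq by (auto simp: fun_eq_iff powr_add[symmetric])
    show ?thesis by (subst eqf[symmetric]) (intro integrable_mult_right int)
  qed
  have "Gamma p = s * (\<integral>a. g (0 + s*a) \<partial>lborel)"
    using lborel_integral_real_affine[of s g 0] s gi by simp
  also have "\<dots> = s * s powr (p-1) * (\<integral>a. indicator {0<..} a * (a powr (p-1) * exp (-(s*a))) \<partial>lborel)"
    unfolding eq by simp
  also have "s * s powr (p-1) = s powr p" using s by (simp add: powr_diff)
  finally have "(\<integral>a. indicator {0<..} a * (a powr (p-1) * exp (-(s*a))) \<partial>lborel) = Gamma p * s powr (-p)"
    using s by (simp add: powr_minus field_simps)
  with int2 show ?thesis by (simp add: has_bochner_integral_iff)
qed

lemma powr_bound_integrable:
  fixes g :: "real \<Rightarrow> real" and p q D :: real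
  assumes [measurable]: "g \<in> borel_measurable borel" and p: "p < 1" and q: "q > 1" and D: "D \<ge> 0"
    and b1: "\<And>x. \<bar>x\<bar> \<le> 1 \<Longrightarrow> \<bar>g x\<bar> \<le> D * \<bar>x\<bar> powr (-p)"
    and b2: "\<And>x. \<bar>x\<bar> > 1 \<Longrightarrow> \<bar>g x\<bar> \<le> D * \<bar>x\<bar> powr (-q)"
  shows "integrable lborel g"
proof -
  define h1 where "h1 = (\<lambda>x::real. indicator {0..1} x * x powr (-p))"
  define h2 where "h2 = (\<lambda>x::real. indicator {1..} x * x powr (-q))"
  have "has_bochner_integral lborel h1 (1 powr (-p+1) / (-p+1))"
    unfolding h1_def by (rule hi_lborel[OF has_integral_powr_from_0]) (use p in auto)
  hence i1: "integrable lborel h1" by (auto simp: has_bochner_integral_iff)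
  have "has_bochner_integral lborel h2 (-(1 powr (-q+1)) / (-q+1))"
    unfolding h2_def by (rule hi_lborel[OF has_integral_powr_to_inf]) (use q in auto)
  hence i2: "integrable lborel h2" by (auto simp: has_bochner_integral_iff)
  have i1': "integrable lborel (\<lambda>x. h1 (0 + (-1) * x))" by (rule lborel_integrable_real_affine[OF i1]) simp
  have i2': "integrable lborel (\<lambda>x. h2 (0 + (-1) * x))" by (rule lborel_integrable_real_affine[OF i2]) simp
  have iw: "integrable lborel (\<lambda>x. D * (h1 x + h1 (0 + (-1) * x) + h2 x + h2 (0 + (-1) * x)))"
    using i1 i1' i2 i2' by auto
  show ?thesis
  proof (rule Bochner_Integration.integrable_bound[OF iw])
    show "AE x in lborel. norm (g x) \<le> norm (D * (h1 x + h1 (0 + (-1) * x) + h2 x + h2 (0 + (-1) * x)))"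
    proof (rule AE_I2)
      fix x :: real
      have nn: "0 \<le> h1 x + h1 (0 + (-1) * x) + h2 x + h2 (0 + (-1) * x)"
        by (auto simp: h1_def h2_def indicator_def)
      have "\<bar>g x\<bar> \<le> D * (h1 x + h1 (0 + (-1) * x) + h2 x + h2 (0 + (-1) * x))"
      proof (cases "\<bar>x\<bar> \<le> 1")
        case True
        have "\<bar>x\<bar> powr (-p) \<le> h1 x + h1 (0 + (-1) * x) + h2 x + h2 (0 + (-1) * x)"
          using True by (cases "x \<ge> 0") (auto simp: h1_def h2_def indicator_def)
        with b1[OF True] D show ?thesis by (meson mult_left_mono order_trans)
      next
        case False
        have "\<bar>x\<bar> powr (-q) \<le> h1 x + h1 (0 + (-1) * x) + h2 x + h2 (0 + (-1) * x)"
          using False by (cases "x \<ge> 0") (auto simp: h1_def h2_def indicator_def)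
        with b2 False D show ?thesis by (meson mult_left_mono order_trans not_le)
      qed
      thus "norm (g x) \<le> norm (D * (h1 x + h1 (0 + (-1) * x) + h2 x + h2 (0 + (-1) * x)))"
        using nn D by simp
    qed
  qed simp
qed


lemma gauss_fourier:
  fixes c t :: real assumes c: "c > 0"
  shows "(\<integral>x. exp (\<i> * complex_of_real (x*t)) * complex_of_real (exp (-(c*x\<^sup>2))) \<partial>lborel)
       = complex_of_real (sqrt (pi/c) * exp (-(t\<^sup>2)/(4*c)))"
proof -
  define s where "s = sqrt (2*c)"
  have s: "s > 0" "s\<^sup>2 = 2*c" using c by (auto simp: s_def)
  define u where "u = t / s"
  have "char std_normal_distribution u = complex_of_real (exp (-(u\<^sup>2)/2))"
    by (simp add: char_std_normal_distribution)
  hence 1: "(\<integral>x. std_normal_density x *\<^sub>R iexp (u*x) \<partial>lborel) = complex_of_real (exp (-(u\<^sup>2)/2))"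
    unfolding char_def by (subst (asm) integral_density) auto
  have 2: "(\<integral>x. std_normal_density x *\<^sub>R iexp (u*x) \<partial>lborel)
     = s *\<^sub>R (\<integral>x. std_normal_density (0 + s*x) *\<^sub>R iexp (u*(0 + s*x)) \<partial>lborel)"
    using lborel_integral_real_affine[of s "\<lambda>x. std_normal_density x *\<^sub>R iexp (u*x)" 0] s by simp
  have 3: "std_normal_density (0 + s*x) *\<^sub>R iexp (u*(0 + s*x))
      = complex_of_real (1/sqrt(2*pi)) * (exp (\<i> * complex_of_real (x*t)) * complex_of_real (exp (-(c*x\<^sup>2))))" for x
    using s unfolding std_normal_density_def u_def
    by (simp add: power_mult_distrib scaleR_conv_of_real mult_ac)
  have "(\<integral>x. exp (\<i> * complex_of_real (x*t)) * complex_of_real (exp (-(c*x\<^sup>2))) \<partial>lborel)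
     = complex_of_real (sqrt (2*pi) / s) * complex_of_real (exp (-(u\<^sup>2)/2))"
    using 1 2 s unfolding 3 by (simp add: scaleR_conv_of_real field_simps real_sqrt_mult)
  also have "\<dots> = complex_of_real (sqrt (pi/c) * exp (-(t\<^sup>2)/(4*c)))"
  proof -
    have "sqrt (2*pi) / s = sqrt (pi/c)" using c unfolding s_def
      by (simp add: real_sqrt_divide[symmetric])
    moreover have "u\<^sup>2/2 = t\<^sup>2/(4*c)" using s c unfolding u_def by (simp add: power_divide)
    ultimately show ?thesis by (simp flip: of_real_mult)
  qed
  finally show ?thesis .
qed


lemma fubini_fourier:
  fixes K :: "real \<Rightarrow> real \<Rightarrow> real" and F :: "real \<Rightarrow> real" and t :: real
  assumes Km[measurable]: "case_prod K \<in> borel_measurable (lborel \<Otimes>\<^sub>M lborel)"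
    and Knn: "\<And>x s. 0 \<le> K x s"
    and fin: "(\<integral>\<^sup>+x. (\<integral>\<^sup>+s. ennreal (K x s) \<partial>lborel) \<partial>lborel) < \<infinity>"
    and Fm[measurable]: "F \<in> borel_measurable borel"
    and F: "AE x in lborel. F x = (\<integral>s. K x s \<partial>lborel)"
  shows "(\<integral>x. exp (\<i> * complex_of_real (x*t)) * complex_of_real (F x) \<partial>lborel)
       = (\<integral>s. (\<integral>x. exp (\<i> * complex_of_real (x*t)) * complex_of_real (K x s) \<partial>lborel) \<partial>lborel)"
proof -
  define g where "g = (\<lambda>x s. exp (\<i> * complex_of_real (x*t)) * complex_of_real (K x s))"
  have gm[measurable]: "case_prod g \<in> borel_measurable (lborel \<Otimes>\<^sub>M lborel)"
    unfolding g_def by measurable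
  have ng: "norm (g x s) = K x s" for x s
    using Knn[of x s] by (simp add: g_def norm_mult)
  have "(\<integral>\<^sup>+z. ennreal (norm (case_prod g z)) \<partial>(lborel \<Otimes>\<^sub>M lborel))
      = (\<integral>\<^sup>+z. ennreal (case_prod K z) \<partial>(lborel \<Otimes>\<^sub>M lborel))"
    by (intro nn_integral_cong) (auto simp: ng split: prod.splits)
  also have "\<dots> = (\<integral>\<^sup>+x. (\<integral>\<^sup>+s. ennreal (K x s) \<partial>lborel) \<partial>lborel)"
    by (subst lborel.nn_integral_fst[symmetric]) auto
  finally have int: "integrable (lborel \<Otimes>\<^sub>M lborel) (case_prod g)"
    unfolding integrable_iff_bounded using fin by simp
  have "(\<integral>s. (\<integral>x. g x s \<partial>lborel) \<partial>lborel) = (\<integral>x. (\<integral>s. g x s \<partial>lborel) \<partial>lborel)"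
    by (rule lborel_pair.Fubini_integral[OF int])
  also have "\<dots> = (\<integral>x. exp (\<i> * complex_of_real (x*t)) * complex_of_real (F x) \<partial>lborel)"
  proof (rule integral_cong_AE)
    show "AE x in lborel. (\<integral>s. g x s \<partial>lborel) = exp (\<i> * complex_of_real (x*t)) * complex_of_real (F x)"
      using F by eventually_elim (simp add: g_def)
  qed (auto simp: g_def)
  finally show ?thesis by (simp add: g_def)
qed


lemma sq_powr: "(x::real) \<noteq> 0 \<Longrightarrow> (x\<^sup>2) powr c = \<bar>x\<bar> powr (2*c)"
proof -
  assume x: "x \<noteq> 0"
  have e: "x\<^sup>2 = \<bar>x\<bar> powr 2" using x by (simp add: powr_numeral)
  have "(x\<^sup>2) powr c = (\<bar>x\<bar> powr 2) powr c" by (subst e) (rule refl)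
  also have "\<dots> = \<bar>x\<bar> powr (2*c)" by (rule powr_powr)
  finally show ?thesis .
qed

lemma exp_neg_le_inv: "y > 0 \<Longrightarrow> exp (-y) \<le> 1 / (y::real)"
proof -
  assume y: "y > 0"
  have "y \<le> exp y" using exp_ge_add_one_self[of y] by linarith
  thus ?thesis using y by (simp add: exp_minus field_simps)
qed

lemma spec_dens_integrable:
  fixes C \<alpha> \<beta> :: real
  assumes "0 < C" "0 < \<alpha>" "\<alpha> < 1/2" "\<beta> > 1/2"
  shows "integrable lborel (spec_dens C \<alpha> \<beta>)"
proof (rule powr_bound_integrable[where p="2*\<alpha>" and q="2*\<alpha>+2*\<beta>" and D=C])
  show "spec_dens C \<alpha> \<beta> \<in> borel_measurable borel" unfolding spec_dens_def[abs_def] by measurable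
next
  fix x :: real assume x: "\<bar>x\<bar> \<le> 1"
  have "(1 + x\<^sup>2) powr (-\<beta>) \<le> (1 + x\<^sup>2) powr 0"
    by (rule powr_mono) (use assms in auto)
  moreover have "1 + x\<^sup>2 > 0" by (simp add: add_pos_nonneg)
  ultimately have "(1 + x\<^sup>2) powr (-\<beta>) \<le> 1" by simp
  thus "\<bar>spec_dens C \<alpha> \<beta> x\<bar> \<le> C * \<bar>x\<bar> powr (- (2 * \<alpha>))"
    using assms unfolding spec_dens_def
    by (simp add: abs_mult mult_left_le)
next
  fix x :: real assume x: "\<bar>x\<bar> > 1"
  have "(1 + x\<^sup>2) powr (-\<beta>) \<le> (x\<^sup>2) powr (-\<beta>)"
    by (rule powr_mono2') (use assms x in auto)
  also have "\<dots> = \<bar>x\<bar> powr (-2*\<beta>)" using x by (subst sq_powr) auto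
  finally have 1: "(1 + x\<^sup>2) powr (-\<beta>) \<le> \<bar>x\<bar> powr (-2*\<beta>)" .
  have "\<bar>spec_dens C \<alpha> \<beta> x\<bar> = C * \<bar>x\<bar> powr (-2*\<alpha>) * (1 + x\<^sup>2) powr (-\<beta>)"
    using assms unfolding spec_dens_def by (simp add: abs_mult)
  also have "\<dots> \<le> C * \<bar>x\<bar> powr (-2*\<alpha>) * \<bar>x\<bar> powr (-2*\<beta>)"
    using 1 assms by (intro mult_left_mono) auto
  also have "\<dots> = C * \<bar>x\<bar> powr (- (2*\<alpha>+2*\<beta>))" by (simp add: powr_add[symmetric] mult.assoc)
  finally show "\<bar>spec_dens C \<alpha> \<beta> x\<bar> \<le> C * \<bar>x\<bar> powr (- (2*\<alpha>+2*\<beta>))" .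
qed (use assms in auto)

lemma gauss_powr_integrable:
  fixes \<alpha> b :: real
  assumes "0 < \<alpha>" "\<alpha> < 1/2" "b > 0"
  shows "integrable lborel (\<lambda>x. \<bar>x\<bar> powr (-2*\<alpha>) * exp (-(b*x\<^sup>2)))"
proof (rule powr_bound_integrable[where p="2*\<alpha>" and q="2" and D="max 1 (1/b)"])
  fix x :: real assume x: "\<bar>x\<bar> \<le> 1"
  have "\<bar>x\<bar> powr (-2*\<alpha>) * exp (-(b*x\<^sup>2)) \<le> \<bar>x\<bar> powr (-2*\<alpha>) * 1"
    by (intro mult_left_mono) (use assms in auto)
  also have "\<dots> \<le> max 1 (1/b) * \<bar>x\<bar> powr (-2*\<alpha>)"
    using mult_right_mono[of 1 "max 1 (1/b)" "\<bar>x\<bar> powr (-2*\<alpha>)"] by simp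
  finally show "\<bar>\<bar>x\<bar> powr (-2*\<alpha>) * exp (-(b*x\<^sup>2))\<bar> \<le> max 1 (1/b) * \<bar>x\<bar> powr (- (2 * \<alpha>))" by simp
next
  fix x :: real assume x: "\<bar>x\<bar> > 1"
  have 1: "\<bar>x\<bar> powr (-2*\<alpha>) \<le> \<bar>x\<bar> powr 0" by (rule powr_mono) (use assms x in auto)
  have 2: "exp (-(b*x\<^sup>2)) \<le> 1/(b*x\<^sup>2)" by (rule exp_neg_le_inv) (use assms x in auto)
  have "\<bar>x\<bar> powr (-2*\<alpha>) * exp (-(b*x\<^sup>2)) \<le> 1 * (1/(b*x\<^sup>2))"
    using 1 2 x by (intro mult_mono) (auto split: if_splits)
  also have "\<dots> = (1/b) * \<bar>x\<bar> powr (-2)" using x by (simp add: powr_minus powr_numeral field_simps)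
  also have "\<dots> \<le> max 1 (1/b) * \<bar>x\<bar> powr (-2)" by (intro mult_right_mono) auto
  finally show "\<bar>\<bar>x\<bar> powr (-2*\<alpha>) * exp (-(b*x\<^sup>2))\<bar> \<le> max 1 (1/b) * \<bar>x\<bar> powr (-2)" by simp
qed (use assms in auto)


lemma stepB:
  fixes \<alpha> b t :: real assumes \<alpha>: "0 < \<alpha>" "\<alpha> < 1/2" and b: "b > 0"
  shows "(\<integral>x. exp (\<i> * complex_of_real (x*t)) * complex_of_real (\<bar>x\<bar> powr (-2*\<alpha>) * exp (-(b*x\<^sup>2))) \<partial>lborel)
       = complex_of_real ((1/Gamma \<alpha>) * (\<integral>a. indicator {0<..} a * (a powr (\<alpha>-1) * (sqrt (pi/(a+b)) * exp (-(t\<^sup>2)/(4*(a+b))))) \<partial>lborel))"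
proof -
  define K where "K = (\<lambda>x a::real. (1/Gamma \<alpha>) * (indicator {0<..} a * (a powr (\<alpha>-1) * exp (-(x\<^sup>2*a)))) * exp (-(b*x\<^sup>2)))"
  have Gp: "Gamma \<alpha> > 0" using \<alpha> by (simp add: Gamma_real_pos)
  have Knn: "0 \<le> K x a" for x a using Gp by (auto simp: K_def indicator_def)
  have Kint: "has_bochner_integral lborel (K x) (\<bar>x\<bar> powr (-2*\<alpha>) * exp (-(b*x\<^sup>2)))" if x: "x \<noteq> 0" for x
  proof -
    have "has_bochner_integral lborel (\<lambda>a. indicator {0<..} a * (a powr (\<alpha>-1) * exp (-(x\<^sup>2*a)))) (Gamma \<alpha> * (x\<^sup>2) powr (-\<alpha>))"
      by (rule gamma_lborel) (use \<alpha> x in auto)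
    hence "has_bochner_integral lborel (\<lambda>a. (1/Gamma \<alpha>) * (indicator {0<..} a * (a powr (\<alpha>-1) * exp (-(x\<^sup>2*a)))) * exp (-(b*x\<^sup>2)))
            ((1/Gamma \<alpha>) * (Gamma \<alpha> * (x\<^sup>2) powr (-\<alpha>)) * exp (-(b*x\<^sup>2)))"
      by (intro has_bochner_integral_mult_left has_bochner_integral_mult_right)
    moreover have "(1/Gamma \<alpha>) * (Gamma \<alpha> * (x\<^sup>2) powr (-\<alpha>)) * exp (-(b*x\<^sup>2)) = \<bar>x\<bar> powr (-2*\<alpha>) * exp (-(b*x\<^sup>2))"
      using Gp x by (simp add: sq_powr)
    ultimately show ?thesis unfolding K_def by simp
  qed
  have gi: "integrable lborel (\<lambda>x. \<bar>x\<bar> powr (-2*\<alpha>) * exp (-(b*x\<^sup>2)))"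
    by (rule gauss_powr_integrable) (use \<alpha> b in auto)
  have "(\<integral>\<^sup>+x. (\<integral>\<^sup>+a. ennreal (K x a) \<partial>lborel) \<partial>lborel) = (\<integral>\<^sup>+x. ennreal (\<bar>x\<bar> powr (-2*\<alpha>) * exp (-(b*x\<^sup>2))) \<partial>lborel)"
  proof (rule nn_integral_cong_AE)
    show "AE x in lborel. (\<integral>\<^sup>+a. ennreal (K x a) \<partial>lborel) = ennreal (\<bar>x\<bar> powr (-2*\<alpha>) * exp (-(b*x\<^sup>2)))"
      using AE_lborel_singleton[of 0]
    proof eventually_elim
      case (elim x)
      from Kint[OF elim] show ?case
        using nn_integral_eq_integral[of lborel "K x"] Knn
        by (auto simp: has_bochner_integral_iff)
    qed
  qed
  also have "\<dots> < \<infinity>"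
  proof -
    have "(\<integral>\<^sup>+x. ennreal (norm (\<bar>x\<bar> powr (-2*\<alpha>) * exp (-(b*x\<^sup>2)))) \<partial>lborel) < \<infinity>"
      using gi unfolding integrable_iff_bounded by simp
    thus ?thesis by simp
  qed
  finally have fin: "(\<integral>\<^sup>+x. (\<integral>\<^sup>+a. ennreal (K x a) \<partial>lborel) \<partial>lborel) < \<infinity>" .
  have F: "AE x in lborel. \<bar>x\<bar> powr (-2*\<alpha>) * exp (-(b*x\<^sup>2)) = (\<integral>a. K x a \<partial>lborel)"
    using AE_lborel_singleton[of 0] by eventually_elim (use Kint in \<open>auto simp: has_bochner_integral_iff\<close>)
  have step: "(\<integral>x. exp (\<i> * complex_of_real (x*t)) * complex_of_real (\<bar>x\<bar> powr (-2*\<alpha>) * exp (-(b*x\<^sup>2))) \<partial>lborel)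
     = (\<integral>a. (\<integral>x. exp (\<i> * complex_of_real (x*t)) * complex_of_real (K x a) \<partial>lborel) \<partial>lborel)"
    by (rule fubini_fourier[OF _ Knn fin _ F]) (unfold K_def, measurable)
  have inner: "(\<integral>x. exp (\<i> * complex_of_real (x*t)) * complex_of_real (K x a) \<partial>lborel)
      = complex_of_real ((1/Gamma \<alpha>) * (indicator {0<..} a * (a powr (\<alpha>-1) * (sqrt (pi/(a+b)) * exp (-(t\<^sup>2)/(4*(a+b)))))))" for a
  proof (cases "a > 0")
    case True
    define c where "c = (1/Gamma \<alpha>) * a powr (\<alpha>-1)"
    have "K x a = c * exp (-((a+b)*x\<^sup>2))" for x
      using True unfolding K_def c_def by (simp add: exp_add[symmetric] algebra_simps)
    hence "(\<integral>x. exp (\<i> * complex_of_real (x*t)) * complex_of_real (K x a) \<partial>lborel)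
         = (\<integral>x. complex_of_real c * (exp (\<i> * complex_of_real (x*t)) * complex_of_real (exp (-((a+b)*x\<^sup>2)))) \<partial>lborel)"
      by (simp add: mult_ac)
    also have "\<dots> = complex_of_real c * complex_of_real (sqrt (pi/(a+b)) * exp (-(t\<^sup>2)/(4*(a+b))))"
      by (subst integral_mult_right_zero) (subst gauss_fourier, use True b in auto)
    finally show ?thesis using True by (simp add: c_def mult_ac)
  next
    case False
    thus ?thesis by (simp add: K_def)
  qed
  show ?thesis unfolding step inner by (simp only: integral_complex_of_real integral_mult_right_zero)
qed


lemma stepA:
  fixes C \<alpha> \<beta> t :: real
  assumes C: "0 < C" and \<alpha>: "0 < \<alpha>" "\<alpha> < 1/2" and \<beta>: "\<beta> > 1/2"
  shows "cov_fun C \<alpha> \<beta> t = complex_of_real (C/(Gamma \<alpha> * Gamma \<beta>) *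
     (\<integral>b. indicator {0<..} b * (b powr (\<beta>-1) * exp (-b) *
        (\<integral>a. indicator {0<..} a * (a powr (\<alpha>-1) * (sqrt (pi/(a+b)) * exp (-(t\<^sup>2)/(4*(a+b))))) \<partial>lborel)) \<partial>lborel))"
proof -
  define K where "K = (\<lambda>x b::real. (C/Gamma \<beta> * \<bar>x\<bar> powr (-2*\<alpha>)) * (indicator {0<..} b * (b powr (\<beta>-1) * exp (-((1+x\<^sup>2)*b)))))"
  have Gp: "Gamma \<beta> > 0" using \<beta> by (simp add: Gamma_real_pos)
  have Knn: "0 \<le> K x b" for x b using Gp C by (auto simp: K_def indicator_def)
  have Kint: "has_bochner_integral lborel (K x) (spec_dens C \<alpha> \<beta> x)" for x
  proof -
    have "has_bochner_integral lborel (\<lambda>b. indicator {0<..} b * (b powr (\<beta>-1) * exp (-((1+x\<^sup>2)*b)))) (Gamma \<beta> * (1+x\<^sup>2) powr (-\<beta>))"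
      by (rule gamma_lborel) (use \<beta> in \<open>auto simp: add_pos_nonneg\<close>)
    hence "has_bochner_integral lborel (K x) ((C/Gamma \<beta> * \<bar>x\<bar> powr (-2*\<alpha>)) * (Gamma \<beta> * (1+x\<^sup>2) powr (-\<beta>)))"
      unfolding K_def by (intro has_bochner_integral_mult_right)
    moreover have "(C/Gamma \<beta> * \<bar>x\<bar> powr (-2*\<alpha>)) * (Gamma \<beta> * (1+x\<^sup>2) powr (-\<beta>)) = spec_dens C \<alpha> \<beta> x"
      using Gp unfolding spec_dens_def by simp
    ultimately show ?thesis by simp
  qed
  have si: "integrable lborel (spec_dens C \<alpha> \<beta>)" by (rule spec_dens_integrable) (use assms in auto)
  have sn: "0 \<le> spec_dens C \<alpha> \<beta> x" for x using C by (simp add: spec_dens_def)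
  have "(\<integral>\<^sup>+x. (\<integral>\<^sup>+b. ennreal (K x b) \<partial>lborel) \<partial>lborel) = (\<integral>\<^sup>+x. ennreal (spec_dens C \<alpha> \<beta> x) \<partial>lborel)"
  proof (rule nn_integral_cong)
    fix x
    from Kint[of x] show "(\<integral>\<^sup>+b. ennreal (K x b) \<partial>lborel) = ennreal (spec_dens C \<alpha> \<beta> x)"
      using nn_integral_eq_integral[of lborel "K x"] Knn
      by (auto simp: has_bochner_integral_iff)
  qed
  also have "\<dots> < \<infinity>"
  proof -
    have "(\<integral>\<^sup>+x. ennreal (norm (spec_dens C \<alpha> \<beta> x)) \<partial>lborel) < \<infinity>"
      using si unfolding integrable_iff_bounded by simp
    thus ?thesis using sn by simp
  qed
  finally have fin: "(\<integral>\<^sup>+x. (\<integral>\<^sup>+b. ennreal (K x b) \<partial>lborel) \<partial>lborel) < \<infinity>" .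
  have F: "AE x in lborel. spec_dens C \<alpha> \<beta> x = (\<integral>b. K x b \<partial>lborel)"
    using Kint by (auto simp: has_bochner_integral_iff)
  have step: "cov_fun C \<alpha> \<beta> t
     = (\<integral>b. (\<integral>x. exp (\<i> * complex_of_real (x*t)) * complex_of_real (K x b) \<partial>lborel) \<partial>lborel)"
    unfolding cov_fun_def
    by (rule fubini_fourier[OF _ Knn fin _ F]) (unfold K_def spec_dens_def[abs_def], measurable)
  have inner: "(\<integral>x. exp (\<i> * complex_of_real (x*t)) * complex_of_real (K x b) \<partial>lborel)
      = complex_of_real (C/(Gamma \<alpha> * Gamma \<beta>) * (indicator {0<..} b * (b powr (\<beta>-1) * exp (-b) *
        (\<integral>a. indicator {0<..} a * (a powr (\<alpha>-1) * (sqrt (pi/(a+b)) * exp (-(t\<^sup>2)/(4*(a+b))))) \<partial>lborel))))" for b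
  proof (cases "b > 0")
    case True
    define c where "c = C/Gamma \<beta> * b powr (\<beta>-1) * exp (-b)"
    have "K x b = c * (\<bar>x\<bar> powr (-2*\<alpha>) * exp (-(b*x\<^sup>2)))" for x
      using True unfolding K_def c_def by (simp add: exp_add[symmetric] algebra_simps)
    hence "(\<integral>x. exp (\<i> * complex_of_real (x*t)) * complex_of_real (K x b) \<partial>lborel)
         = (\<integral>x. complex_of_real c * (exp (\<i> * complex_of_real (x*t)) * complex_of_real (\<bar>x\<bar> powr (-2*\<alpha>) * exp (-(b*x\<^sup>2)))) \<partial>lborel)"
      by (simp add: mult_ac)
    also have "\<dots> = complex_of_real c * complex_of_real ((1/Gamma \<alpha>) * (\<integral>a. indicator {0<..} a * (a powr (\<alpha>-1) * (sqrt (pi/(a+b)) * exp (-(t\<^sup>2)/(4*(a+b))))) \<partial>lborel))"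
      by (subst integral_mult_right_zero) (subst stepB, use True \<alpha> in auto)
    finally show ?thesis using True by (simp add: c_def mult_ac)
  next
    case False
    thus ?thesis by (simp add: K_def)
  qed
  show ?thesis unfolding step inner by (simp only: integral_complex_of_real integral_mult_right_zero)
qed


definition gphi :: "real \<Rightarrow> real \<Rightarrow> real \<Rightarrow> real" where
  "gphi \<alpha> \<epsilon> x = indicator {0<..} x * (x powr (\<alpha>-1) * (sqrt (pi/(x+\<epsilon>)) * exp (-1/(4*(x+\<epsilon>)))))"

definition wphi :: "real \<Rightarrow> real \<Rightarrow> real" where
  "wphi \<alpha> x = sqrt pi * (indicator {0..1} x * x powr (\<alpha>-1) + indicator {1..} x * x powr (\<alpha> - 3/2))"

lemma gphi_meas[measurable]: "(\<lambda>(e, x). gphi \<alpha> e x) \<in> borel_measurable (borel \<Otimes>\<^sub>M lborel)"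
  unfolding gphi_def by measurable

lemma gphi_meas1[measurable]: "gphi \<alpha> e \<in> borel_measurable borel"
  unfolding gphi_def by measurable

lemma wphi_int:
  fixes \<alpha> :: real assumes "0 < \<alpha>" "\<alpha> < 1/2"
  shows "integrable lborel (wphi \<alpha>)"
proof -
  have "has_bochner_integral lborel (\<lambda>x. indicator {0..1} x * x powr (\<alpha>-1)) (1 powr ((\<alpha>-1)+1) / ((\<alpha>-1)+1))"
    by (rule hi_lborel[OF has_integral_powr_from_0]) (use assms in auto)
  hence i1: "integrable lborel (\<lambda>x. indicator {0..1} x * x powr (\<alpha>-1))" by (auto simp: has_bochner_integral_iff)
  have "has_bochner_integral lborel (\<lambda>x. indicator {1..} x * x powr (\<alpha>-3/2)) (-(1 powr ((\<alpha>-3/2)+1)) / ((\<alpha>-3/2)+1))"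
    by (rule hi_lborel[OF has_integral_powr_to_inf]) (use assms in auto)
  hence i2: "integrable lborel (\<lambda>x. indicator {1..} x * x powr (\<alpha>-3/2))" by (auto simp: has_bochner_integral_iff)
  show ?thesis unfolding wphi_def using i1 i2 by auto
qed

lemma sqrt_exp_bound:
  fixes y :: real assumes y: "y > 0"
  shows "sqrt (pi/y) * exp (-1/(4*y)) \<le> sqrt pi"
proof -
  define u where "u = 1/(4*y)"
  have u: "u > 0" using y by (simp add: u_def)
  have e: "(1+u)\<^sup>2 - 4*u = (1-u)\<^sup>2" by (simp add: power2_eq_square algebra_simps)
  have "sqrt (4*u) \<le> sqrt ((1+u)\<^sup>2)"
    by (rule real_sqrt_le_mono) (use e zero_le_power2[of "1-u"] in linarith)
  also have "\<dots> = 1 + u" using u by simp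
  finally have 1: "sqrt (4*u) \<le> 1 + u" .
  have 2: "1 + u \<le> exp u" by (rule exp_ge_add_one_self)
  have "sqrt (pi/y) = sqrt pi * sqrt (4*u)" using y by (simp add: u_def real_sqrt_mult[symmetric])
  moreover have "exp (-1/(4*y)) = 1 / exp u" by (simp add: u_def exp_minus field_simps)
  ultimately have "sqrt (pi/y) * exp (-1/(4*y)) = sqrt pi * (sqrt (4*u) / exp u)" by simp
  also have "sqrt (4*u) \<le> exp u" using 1 2 by linarith
  hence "sqrt (4*u) / exp u \<le> 1" by (simp add: divide_le_eq)
  hence "sqrt pi * (sqrt (4*u) / exp u) \<le> sqrt pi * 1" by (intro mult_left_mono) auto
  finally show ?thesis by simp
qed

lemma gphi_nonneg: "0 \<le> gphi \<alpha> e x" if "e \<ge> 0"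
  using that by (auto simp: gphi_def indicator_def intro!: mult_nonneg_nonneg)

lemma wphi_nonneg: "0 \<le> wphi \<alpha> x"
  unfolding wphi_def by (intro mult_nonneg_nonneg add_nonneg_nonneg) (auto simp: indicator_def)

lemma gphi_bound:
  fixes \<alpha> e x :: real assumes "e \<ge> 0"
  shows "\<bar>gphi \<alpha> e x\<bar> \<le> wphi \<alpha> x"
proof (cases "x > 0")
  case False
  hence "gphi \<alpha> e x = 0" by (simp add: gphi_def)
  thus ?thesis using wphi_nonneg[of \<alpha> x] by simp
next
  case x: True
  have gx: "gphi \<alpha> e x = x powr (\<alpha>-1) * (sqrt (pi/(x+e)) * exp (-1/(4*(x+e))))" using x by (simp add: gphi_def)
  have nn: "0 \<le> x powr (\<alpha>-1) * (sqrt (pi/(x+e)) * exp (-1/(4*(x+e))))"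
    using x assms by (intro mult_nonneg_nonneg) auto
  have w: "wphi \<alpha> x = sqrt pi * (indicator {0..1} x * x powr (\<alpha>-1)) + sqrt pi * (indicator {1..} x * x powr (\<alpha> - 3/2))"
    unfolding wphi_def by (simp add: distrib_left)
  have w1: "0 \<le> sqrt pi * (indicator {0..1} x * x powr (\<alpha>-1))" "0 \<le> sqrt pi * (indicator {1..} x * x powr (\<alpha> - 3/2))"
    by (auto simp: indicator_def)
  show ?thesis
  proof (cases "x \<le> 1")
    case True
    have "x powr (\<alpha>-1) * (sqrt (pi/(x+e)) * exp (-1/(4*(x+e)))) \<le> x powr (\<alpha>-1) * sqrt pi"
      by (intro mult_left_mono sqrt_exp_bound) (use x assms in auto)
    moreover have "sqrt pi * (indicator {0..1} x * x powr (\<alpha>-1)) = x powr (\<alpha>-1) * sqrt pi"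
      using x True by (simp add: indicator_def)
    ultimately show ?thesis using gx nn w w1 by linarith
  next
    case False
    have "pi/(x+e) \<le> pi/x"
      by (rule divide_left_mono) (use x assms in auto)
    hence "sqrt (pi/(x+e)) \<le> sqrt (pi/x)" by (rule real_sqrt_le_mono)
    also have "\<dots> = sqrt pi * x powr (-1/2)"
    proof -
      have "x powr (-1/2) = 1 / x powr (1/2)" by (subst powr_minus_divide[symmetric]) simp
      also have "\<dots> = 1 / sqrt x" using x by (simp add: powr_half_sqrt)
      finally show ?thesis by (simp add: real_sqrt_divide)
    qed
    finally have s: "sqrt (pi/(x+e)) \<le> sqrt pi * x powr (-1/2)" .
    have "exp (-1/(4*(x+e))) \<le> 1" using x assms by simp
    hence "sqrt (pi/(x+e)) * exp (-1/(4*(x+e))) \<le> sqrt (pi/(x+e)) * 1"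
      by (intro mult_left_mono) auto
    with s have "sqrt (pi/(x+e)) * exp (-1/(4*(x+e))) \<le> sqrt pi * x powr (-1/2)" by linarith
    hence "x powr (\<alpha>-1) * (sqrt (pi/(x+e)) * exp (-1/(4*(x+e)))) \<le> x powr (\<alpha>-1) * (sqrt pi * x powr (-1/2))"
      by (intro mult_left_mono) auto
    also have "\<dots> = sqrt pi * (x powr (\<alpha>-1) * x powr (-1/2))" by (simp add: mult_ac)
    also have "x powr (\<alpha>-1) * x powr (-1/2) = x powr (\<alpha> - 3/2)"
      by (simp add: powr_add[symmetric])
    also have "sqrt pi * x powr (\<alpha> - 3/2) = sqrt pi * (indicator {1..} x * x powr (\<alpha> - 3/2))"
      using False by (simp add: indicator_def)
    finally show ?thesis using gx nn w w1 by linarith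
  qed
qed

lemma gphi_int:
  fixes \<alpha> e :: real assumes "0 < \<alpha>" "\<alpha> < 1/2" "e \<ge> 0"
  shows "integrable lborel (gphi \<alpha> e)"
proof (rule Bochner_Integration.integrable_bound[OF wphi_int[OF assms(1,2)]])
  show "AE x in lborel. norm (gphi \<alpha> e x) \<le> norm (wphi \<alpha> x)"
  proof (rule AE_I2)
    fix x
    have "\<bar>gphi \<alpha> e x\<bar> \<le> wphi \<alpha> x" by (rule gphi_bound[OF assms(3)])
    thus "norm (gphi \<alpha> e x) \<le> norm (wphi \<alpha> x)" by simp
  qed
qed simp


lemma rearr4: fixes A B C P Q E :: real assumes "E \<noteq> 0"
  shows "(1/4*A) * ((P*B) * ((Q*2*C) * (1/E))) = Q * (P/2) * (A*B*C) / E"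
  using assms by (simp add: field_simps)
lemma p0c4: "(4::real) powr (1-\<alpha>) = 2 powr (2-2*\<alpha>)"
  proof -
    have "(4::real) powr (1-\<alpha>) = (2*2) powr (1-\<alpha>)" by (rule arg_cong[where f="\<lambda>u. u powr (1-\<alpha>)"]) simp
    also have "\<dots> = 2 powr (1-\<alpha>) * 2 powr (1-\<alpha>)" by (rule powr_mult)
    also have "\<dots> = 2 powr ((1-\<alpha>)+(1-\<alpha>))" by (rule powr_add[symmetric])
    also have "\<dots> = 2 powr (2-2*\<alpha>)" by (rule arg_cong[where f="\<lambda>u. 2 powr u"]) simp
    finally show ?thesis .
  qed
lemma p0a2: fixes y :: real assumes y: "y > 0" shows "(1/(4*y)) powr (\<alpha>-1) = 2 powr (2-2*\<alpha>) * y powr (1-\<alpha>)"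
  proof -
    have "(1/(4*y)) powr (\<alpha>-1) = 1 / (4*y) powr (\<alpha>-1)" using y by (simp add: powr_divide)
    also have "\<dots> = (4*y) powr (-(\<alpha>-1))" by (rule powr_minus_divide[symmetric])
    also have "\<dots> = (4*y) powr (1-\<alpha>)" by (rule arg_cong[where f="\<lambda>u. (4*y) powr u"]) simp
    also have "\<dots> = 4 powr (1-\<alpha>) * y powr (1-\<alpha>)" using y by (simp add: powr_mult)
    finally show ?thesis unfolding p0c4 .
  qed
lemma p0a1: fixes y::real assumes y: "y>0" shows "\<bar>-1/(4*y\<^sup>2)\<bar> = 1/4 * y powr (-2)"
proof -
  have q: "y powr 2 = y^2" by (rule powr_numeral) (use y in simp)
  have p: "y powr (-2) = 1/y^2" unfolding q[symmetric] by (rule powr_minus_divide)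
  show ?thesis unfolding p using y by simp
qed
lemma p0a3: fixes y::real assumes y: "y>0" shows  "sqrt (pi/(1/(4*y))) = sqrt pi * 2 * y powr (1/2)"
    using y by (simp add: real_sqrt_mult powr_half_sqrt)
lemma p0a4: fixes y::real assumes y: "y>0" shows "exp (-1/(4*(1/(4*y)))) = 1 / exp y" using y by (simp add: exp_minus field_simps)
lemma p0b1: fixes y::real shows "y powr (-2) * y powr (1-\<alpha>) * y powr (1/2) = y powr ((1/2-\<alpha>)-1)"
proof -
  have e: "(1/2-\<alpha>)-1 = -2 + (1-\<alpha>) + 1/2" by simp
  show ?thesis unfolding e by (simp only: powr_add)
qed
lemma p0b2: "2 powr (2-2*\<alpha>) / 2 = (2::real) powr (1-2*\<alpha>)"
proof -
  have e: "2-2*\<alpha> = 1 + (1-2*\<alpha>)" by simp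
  show ?thesis unfolding e by (simp only: powr_add) simp
qed
lemma phi0_alg:
  fixes \<alpha> y :: real assumes y: "y > 0"
  shows "\<bar>-1/(4*y\<^sup>2)\<bar> * ((1/(4*y)) powr (\<alpha>-1) * (sqrt (pi/(1/(4*y))) * exp (-1/(4*(1/(4*y))))))
       = sqrt pi * 2 powr (1-2*\<alpha>) * (y powr ((1/2-\<alpha>)-1) / exp y)"
proof -
  have "\<bar>-1/(4*y\<^sup>2)\<bar> * ((1/(4*y)) powr (\<alpha>-1) * (sqrt (pi/(1/(4*y))) * exp (-1/(4*(1/(4*y))))))
      = sqrt pi * (2 powr (2-2*\<alpha>) / 2) * (y powr (-2) * y powr (1-\<alpha>) * y powr (1/2)) / exp y"
    unfolding p0a1[OF y] p0a2[OF y] p0a3[OF y] p0a4[OF y] by (rule rearr4) simp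
  thus ?thesis unfolding p0b1 p0b2 by (simp only: times_divide_eq_right)
qed

lemma phi0:
  fixes \<alpha> :: real assumes a: "0 < \<alpha>" "\<alpha> < 1/2"
  shows "has_bochner_integral lborel (gphi \<alpha> 0) (sqrt pi * 2 powr (1-2*\<alpha>) * Gamma (1/2-\<alpha>))"
proof -
  define S where "S = ({0<..} :: real set)"
  define f where "f = (\<lambda>x::real. x powr (\<alpha>-1) * (sqrt (pi/x) * exp (-1/(4*x))))"
  define B where "B = sqrt pi * 2 powr (1-2*\<alpha>) * Gamma (1/2-\<alpha>)"
  define h where "h = (\<lambda>y::real. sqrt pi * 2 powr (1-2*\<alpha>) * (y powr ((1/2-\<alpha>)-1) / exp y))"
  have "((\<lambda>y. y powr ((1/2-\<alpha>)-1) / exp y) has_integral Gamma (1/2-\<alpha>)) {0..}"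
    by (rule Gamma_integral_real) (use a in simp)
  hence "((\<lambda>y. y powr ((1/2-\<alpha>)-1) / exp y) has_integral Gamma (1/2-\<alpha>)) S"
    unfolding S_def by (rule has_integral_spike_set_eq[THEN iffD1, rotated 2])
       (auto intro: negligible_subset[of "{0}"])
  hence hI: "(h has_integral B) S" unfolding h_def B_def
    by (intro has_integral_mult_right)
  have eq: "\<bar>-1/(4*y\<^sup>2)\<bar> * f (1/(4*y)) = h y" if "y \<in> S" for y
    using that phi0_alg[of y \<alpha>] unfolding S_def f_def h_def by simp
  have hI2: "((\<lambda>y. \<bar>-1/(4*y\<^sup>2)\<bar> * f (1/(4*y))) has_integral B) S"
    by (rule has_integral_eq[OF _ hI]) (metis eq)
  have nn: "0 \<le> \<bar>-1/(4*y\<^sup>2)\<bar> * f (1/(4*y))" if "y \<in> S" for y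
    using that unfolding S_def f_def by (intro mult_nonneg_nonneg) auto
  have abs: "(\<lambda>y. \<bar>-1/(4*y\<^sup>2)\<bar> * f (1/(4*y))) absolutely_integrable_on S"
    by (rule nonnegative_absolutely_integrable_1) (use hI2 nn in auto)
  have img: "(\<lambda>y. 1/(4*y)) ` S = S"
  proof
    show "(\<lambda>y. 1/(4*y)) ` S \<subseteq> S" unfolding S_def by auto
    show "S \<subseteq> (\<lambda>y. 1/(4*y)) ` S"
    proof
      fix x assume x: "x \<in> S"
      hence "1/(4*(1/(4*x))) = x" "1/(4*x) \<in> S" unfolding S_def by auto
      thus "x \<in> (\<lambda>y. 1/(4*y)) ` S" by (metis image_eqI)
    qed
  qed
  have cov: "f absolutely_integrable_on ((\<lambda>y. 1/(4*y)) ` S) \<and> integral ((\<lambda>y. 1/(4*y)) ` S) f = B"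
  proof (rule has_absolute_integral_change_of_variables_1'[THEN iffD1])
    show "S \<in> sets lebesgue" unfolding S_def by simp
    show "((\<lambda>y. 1/(4*y)) has_field_derivative -1/(4*y\<^sup>2)) (at y within S)" if "y \<in> S" for y
      using that unfolding S_def
      by (auto intro!: derivative_eq_intros simp: power2_eq_square field_simps)
    show "inj_on (\<lambda>y. 1/(4*y)) S" unfolding S_def inj_on_def by auto
    show "(\<lambda>y. \<bar>-1/(4*y\<^sup>2)\<bar> * f (1/(4*y))) absolutely_integrable_on S \<and>
          integral S (\<lambda>y. \<bar>-1/(4*y\<^sup>2)\<bar> * f (1/(4*y))) = B"
      using abs hI2 by (auto intro: integral_unique)
  qed
  hence fI: "(f has_integral B) S" unfolding img
    using absolutely_integrable_on_def integrable_integral set_lebesgue_integral_eq_integral(1) by fastforce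
  have "has_bochner_integral lborel (\<lambda>x. indicator S x * f x) B"
    by (rule hi_lborel[OF fI]) (unfold S_def f_def, auto)
  moreover have "(\<lambda>x. indicator S x * f x) = gphi \<alpha> 0"
    unfolding S_def f_def gphi_def by (auto simp: fun_eq_iff)
  ultimately show ?thesis unfolding B_def by simp
qed


lemma pos_not_nonpos_Int: "x > 0 \<Longrightarrow> complex_of_real x \<notin> \<int>\<^sub>\<le>\<^sub>0"
  by (auto elim!: nonpos_Ints_cases simp: complex_eq_iff)

lemma gamma_const:
  fixes \<alpha> :: real assumes a: "0 < \<alpha>" "\<alpha> < 1/2"
  shows "sqrt pi * 2 powr (1-2*\<alpha>) * Gamma (1/2-\<alpha>) * cos (pi*\<alpha>) * Gamma (2*\<alpha>) = pi * Gamma \<alpha>"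
proof -
  have D0: "Gamma (complex_of_real \<alpha>) * Gamma (complex_of_real \<alpha> + 1/2) =
             exp ((1 - 2*complex_of_real \<alpha>) * of_real (ln 2)) * of_real (sqrt pi) * Gamma (2*complex_of_real \<alpha>)"
    by (rule Gamma_legendre_duplication)
       (use pos_not_nonpos_Int[of \<alpha>] pos_not_nonpos_Int[of "\<alpha>+1/2"] a in auto)
  have "complex_of_real (Gamma \<alpha> * Gamma (\<alpha> + 1/2)) = complex_of_real (exp ((1-2*\<alpha>) * ln 2) * sqrt pi * Gamma (2*\<alpha>))"
  proof -
    have e1: "complex_of_real \<alpha> + 1/2 = complex_of_real (\<alpha>+1/2)" by simp
    have e2: "2*complex_of_real \<alpha> = complex_of_real (2*\<alpha>)" by simp
    have e3: "(1 - 2*complex_of_real \<alpha>) * of_real (ln 2) = complex_of_real ((1-2*\<alpha>) * ln 2)" by simp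
    have e4: "exp ((1 - complex_of_real (2*\<alpha>)) * of_real (ln 2)) = complex_of_real (exp ((1-2*\<alpha>) * ln 2))"
      by (subst exp_of_real[symmetric]) simp
    have "Gamma (complex_of_real \<alpha>) * Gamma (complex_of_real (\<alpha> + 1/2)) =
             complex_of_real (exp ((1-2*\<alpha>) * ln 2)) * of_real (sqrt pi) * Gamma (complex_of_real (2*\<alpha>))"
      using D0 unfolding e1 e2 e4 .
    hence "complex_of_real (Gamma \<alpha>) * complex_of_real (Gamma (\<alpha>+1/2)) =
        complex_of_real (exp ((1-2*\<alpha>) * ln 2)) * of_real (sqrt pi) * complex_of_real (Gamma (2*\<alpha>))"
      unfolding Gamma_complex_of_real .
    thus ?thesis by (metis of_real_mult)
  qed
  hence D: "Gamma \<alpha> * Gamma (\<alpha> + 1/2) = 2 powr (1-2*\<alpha>) * sqrt pi * Gamma (2*\<alpha>)"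
    unfolding of_real_eq_iff by (simp add: powr_def mult_ac)
  have R0: "Gamma (complex_of_real (1/2-\<alpha>)) * Gamma (1 - complex_of_real (1/2-\<alpha>)) = of_real pi / sin (of_real pi * complex_of_real (1/2-\<alpha>))"
    by (rule Gamma_reflection_complex)
  have "complex_of_real (Gamma (1/2-\<alpha>) * Gamma (1/2+\<alpha>)) = complex_of_real (pi / sin (pi * (1/2-\<alpha>)))"
  proof -
    have e1: "1 - complex_of_real (1/2-\<alpha>) = complex_of_real (1/2+\<alpha>)" by simp
    have e2: "of_real pi * complex_of_real (1/2-\<alpha>) = complex_of_real (pi * (1/2-\<alpha>))" by simp
    show ?thesis using R0 unfolding e1 e2 Gamma_complex_of_real sin_of_real by simp
  qed
  hence R: "Gamma (1/2-\<alpha>) * Gamma (1/2+\<alpha>) = pi / cos (pi*\<alpha>)"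
    unfolding of_real_eq_iff by (simp add: right_diff_distrib sin_diff)
  have c: "cos (pi*\<alpha>) > 0" using a by (intro cos_gt_zero) auto
  have g: "Gamma (1/2+\<alpha>) > 0" using a by (intro Gamma_real_pos) auto
  have "sqrt pi * 2 powr (1-2*\<alpha>) * Gamma (1/2-\<alpha>) * cos (pi*\<alpha>) * Gamma (2*\<alpha>)
      = Gamma (1/2-\<alpha>) * cos (pi*\<alpha>) * (2 powr (1-2*\<alpha>) * sqrt pi * Gamma (2*\<alpha>))" by (simp add: mult_ac)
  also have "\<dots> = Gamma (1/2-\<alpha>) * cos (pi*\<alpha>) * (Gamma \<alpha> * Gamma (\<alpha> + 1/2))" by (simp add: D)
  also have "\<dots> = (Gamma (1/2-\<alpha>) * Gamma (1/2+\<alpha>)) * cos (pi*\<alpha>) * Gamma \<alpha>" by (simp add: mult_ac add.commute)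
  also have "\<dots> = pi * Gamma \<alpha>" using c by (simp add: R)
  finally show ?thesis .
qed


definition phi :: "real \<Rightarrow> real \<Rightarrow> real" where
  "phi \<alpha> e = (\<integral>x. gphi \<alpha> e x \<partial>lborel)"

lemma phi_meas[measurable]: "phi \<alpha> \<in> borel_measurable borel"
proof -
  have "(\<lambda>e. \<integral>x. gphi \<alpha> e x \<partial>lborel) \<in> borel_measurable borel"
    by (rule lborel.borel_measurable_lebesgue_integral) (rule gphi_meas)
  thus ?thesis unfolding phi_def[abs_def] .
qed

lemma phi_bounds:
  fixes \<alpha> e :: real assumes a: "0 < \<alpha>" "\<alpha> < 1/2" and e: "e \<ge> 0"
  shows "0 \<le> phi \<alpha> e" "phi \<alpha> e \<le> (\<integral>x. wphi \<alpha> x \<partial>lborel)"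
proof -
  show "0 \<le> phi \<alpha> e" unfolding phi_def
    by (rule Bochner_Integration.integral_nonneg) (rule gphi_nonneg[OF e])
  show "phi \<alpha> e \<le> (\<integral>x. wphi \<alpha> x \<partial>lborel)" unfolding phi_def
  proof (rule integral_mono[OF gphi_int[OF a e] wphi_int[OF a]])
    fix x show "gphi \<alpha> e x \<le> wphi \<alpha> x" using gphi_bound[OF e, of \<alpha> x] by simp
  qed
qed

lemma inv_sq_tendsto: "((\<lambda>t::real. b / t\<^sup>2) \<longlongrightarrow> 0) at_top"
proof -
  have "filterlim (\<lambda>t::real. t\<^sup>2) at_top at_top"
    by (rule filterlim_pow_at_top) (auto intro: filterlim_ident)
  hence "filterlim (\<lambda>t::real. t\<^sup>2) at_infinity at_top"
    by (rule filterlim_at_top_imp_at_infinity)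
  thus ?thesis by (rule tendsto_divide_0[OF tendsto_const])
qed

lemma phi_tendsto:
  fixes \<alpha> b :: real assumes a: "0 < \<alpha>" "\<alpha> < 1/2" and b: "b \<ge> 0"
  shows "((\<lambda>t. phi \<alpha> (b/t\<^sup>2)) \<longlongrightarrow> phi \<alpha> 0) at_top"
  unfolding phi_def
proof (rule integral_dominated_convergence_at_top[OF _ _ wphi_int[OF a]])
  show "gphi \<alpha> 0 \<in> borel_measurable lborel" by simp
  show "gphi \<alpha> (b/t\<^sup>2) \<in> borel_measurable lborel" for t by simp
  show "AE x in lborel. ((\<lambda>t. gphi \<alpha> (b/t\<^sup>2) x) \<longlongrightarrow> gphi \<alpha> 0 x) at_top"
  proof (rule AE_I2)
    fix x :: real
    show "((\<lambda>t. gphi \<alpha> (b/t\<^sup>2) x) \<longlongrightarrow> gphi \<alpha> 0 x) at_top"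
    proof (cases "x > 0")
      case False
      thus ?thesis by (simp add: gphi_def)
    next
      case True
      show ?thesis unfolding gphi_def
        by (intro tendsto_intros inv_sq_tendsto) (use True in auto)
    qed
  qed
  show "\<forall>\<^sub>F t in at_top. AE x in lborel. norm (gphi \<alpha> (b/t\<^sup>2) x) \<le> wphi \<alpha> x"
  proof (intro always_eventually allI AE_I2)
    fix t x :: real
    have "b/t\<^sup>2 \<ge> 0" using b by simp
    from gphi_bound[OF this, of \<alpha> x] show "norm (gphi \<alpha> (b/t\<^sup>2) x) \<le> wphi \<alpha> x" by simp
  qed
qed


lemma Phi_scale:
  fixes \<alpha> b t :: real assumes t: "t > 0" and b: "b \<ge> 0"
  shows "(\<integral>a. indicator {0<..} a * (a powr (\<alpha>-1) * (sqrt (pi/(a+b)) * exp (-(t\<^sup>2)/(4*(a+b))))) \<partial>lborel)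
       = t powr (2*\<alpha>-1) * phi \<alpha> (b/t\<^sup>2)"
proof -
  define h where "h = (\<lambda>a::real. indicator {0<..} a * (a powr (\<alpha>-1) * (sqrt (pi/(a+b)) * exp (-(t\<^sup>2)/(4*(a+b))))))"
  have pt: "t\<^sup>2 > 0" using t by simp
  have f4: "t powr (2*\<alpha>-2) * (1/t) = t powr (2*\<alpha>-3)"
  proof -
    have "t powr (2*\<alpha>-3) = t powr ((2*\<alpha>-2) + (-1))" by (rule arg_cong[where f="\<lambda>u. t powr u"]) simp
    also have "\<dots> = t powr (2*\<alpha>-2) * t powr (-1)" by (rule powr_add)
    also have "t powr (-1) = 1 / t powr 1" by (rule powr_minus_divide)
    also have "t powr 1 = t" using t by simp
    finally show ?thesis by simp
  qed
  have key: "h (0 + t\<^sup>2 * x) = t powr (2*\<alpha>-3) * gphi \<alpha> (b/t\<^sup>2) x" for x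
  proof (cases "x > 0")
    case False
    hence "\<not> 0 < t\<^sup>2 * x" using pt by (simp add: zero_less_mult_iff)
    thus ?thesis using False by (simp add: h_def gphi_def)
  next
    case True
    define y where "y = x + b/t\<^sup>2"
    have y: "y > 0" using True b pt by (simp add: y_def add_pos_nonneg)
    have e1: "t\<^sup>2 * x + b = t\<^sup>2 * y" using pt by (simp add: y_def field_simps)
    have f1: "(t\<^sup>2*x) powr (\<alpha>-1) = t powr (2*\<alpha>-2) * x powr (\<alpha>-1)"
    proof -
      have "(t\<^sup>2*x) powr (\<alpha>-1) = (t\<^sup>2) powr (\<alpha>-1) * x powr (\<alpha>-1)"
        by (rule powr_mult)
      also have "(t\<^sup>2) powr (\<alpha>-1) = \<bar>t\<bar> powr (2*(\<alpha>-1))" by (rule sq_powr) (use t in simp)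
      also have "\<dots> = t powr (2*\<alpha>-2)" using t by (simp add: algebra_simps)
      finally show ?thesis .
    qed
    have f2: "sqrt (pi/(t\<^sup>2*x+b)) = (1/t) * sqrt (pi/y)"
    proof -
      have "pi/(t\<^sup>2*x+b) = (1/t)\<^sup>2 * (pi/y)" unfolding e1 using t y by (simp add: field_simps power2_eq_square)
      hence "sqrt (pi/(t\<^sup>2*x+b)) = sqrt ((1/t)\<^sup>2 * (pi/y))" by (rule arg_cong)
      also have "\<dots> = sqrt ((1/t)\<^sup>2) * sqrt (pi/y)" by (rule real_sqrt_mult)
      also have "sqrt ((1/t)\<^sup>2) = 1/t" using t by simp
      finally show ?thesis .
    qed
    have f3: "exp (-(t\<^sup>2)/(4*(t\<^sup>2*x+b))) = exp (-1/(4*y))"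
      unfolding e1 using pt y by (simp add: field_simps)
    have i: "indicator {0<..} (0 + t\<^sup>2 * x) = (1::real)" using True pt by simp
    have "h (0 + t\<^sup>2 * x) = (t\<^sup>2*x) powr (\<alpha>-1) * (sqrt (pi/(t\<^sup>2*x+b)) * exp (-(t\<^sup>2)/(4*(t\<^sup>2*x+b))))"
      unfolding h_def i by (simp only: mult_1 add_0_left)
    also have "\<dots> = (t powr (2*\<alpha>-2) * x powr (\<alpha>-1)) * ((1/t) * sqrt (pi/y) * exp (-1/(4*y)))"
      unfolding f1 f2 f3 by (simp only: mult_ac)
    also have "\<dots> = (t powr (2*\<alpha>-2) * (1/t)) * (x powr (\<alpha>-1) * (sqrt (pi/y) * exp (-1/(4*y))))"
      by (simp only: mult_ac)
    also have "\<dots> = t powr (2*\<alpha>-3) * gphi \<alpha> (b/t\<^sup>2) x"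
      unfolding f4 using True by (simp add: gphi_def y_def)
    finally show ?thesis .
  qed
  have "(\<integral>a. h a \<partial>lborel) = \<bar>t\<^sup>2\<bar> *\<^sub>R (\<integral>x. h (0 + t\<^sup>2 * x) \<partial>lborel)"
    by (rule lborel_integral_real_affine) (use pt in simp)
  also have "\<dots> = t\<^sup>2 * (t powr (2*\<alpha>-3) * phi \<alpha> (b/t\<^sup>2))"
    unfolding key phi_def by simp
  also have "\<dots> = (t\<^sup>2 * t powr (2*\<alpha>-3)) * phi \<alpha> (b/t\<^sup>2)" by (simp only: mult_ac)
  also have "t\<^sup>2 * t powr (2*\<alpha>-3) = t powr (2*\<alpha>-1)"
  proof -
    have "t powr (2*\<alpha>-1) = t powr (2 + (2*\<alpha>-3))" by (rule arg_cong[where f="\<lambda>u. t powr u"]) simp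
    also have "\<dots> = t powr 2 * t powr (2*\<alpha>-3)" by (rule powr_add)
    also have "t powr 2 = t\<^sup>2" by (rule powr_numeral) (use t in simp)
    finally show ?thesis by simp
  qed
  finally show ?thesis unfolding h_def .
qed


theorem lemma4p2:
  fixes C \<alpha> \<beta> :: real
  assumes "0 < C" and "0 < \<alpha>" and "\<alpha> < 1/2" and "\<beta> > 1/2"
  shows "cov_fun C \<alpha> \<beta> \<sim>[at_top]
           (\<lambda>t. complex_of_real (t powr (2 * \<alpha> - 1) *
                 (pi * C / (cos (pi * \<alpha>) * Gamma (2 * \<alpha>)))))"
proof -
  note a = assms(2,3)
  define K where "K = pi * C / (cos (pi * \<alpha>) * Gamma (2 * \<alpha>))"
  define P0 where "P0 = sqrt pi * 2 powr (1-2*\<alpha>) * Gamma (1/2-\<alpha>)"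
  define Q where "Q = (\<lambda>t. \<integral>b. indicator {0<..} b * (b powr (\<beta>-1) * exp (-b) * phi \<alpha> (b/t\<^sup>2)) \<partial>lborel)"
  define Mw where "Mw = (\<integral>x. wphi \<alpha> x \<partial>lborel)"
  have Ga: "Gamma \<alpha> > 0" using a by (simp add: Gamma_real_pos)
  have Gb: "Gamma \<beta> > 0" using assms by (simp add: Gamma_real_pos)
  have G2a: "Gamma (2*\<alpha>) > 0" using a by (simp add: Gamma_real_pos)
  have cpos: "cos (pi*\<alpha>) > 0" using a by (intro cos_gt_zero) auto
  have Kpos: "K > 0" unfolding K_def using assms cpos G2a by simp
  have phi0v: "phi \<alpha> 0 = P0"
    unfolding phi_def P0_def using phi0[OF a] by (simp add: has_bochner_integral_iff)
  have cov_eq: "cov_fun C \<alpha> \<beta> t = complex_of_real (C/(Gamma \<alpha> * Gamma \<beta>) * (t powr (2*\<alpha>-1) * Q t))"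
    if t: "t > 0" for t
  proof -
    have "(\<integral>b. indicator {0<..} b * (b powr (\<beta>-1) * exp (-b) *
        (\<integral>a. indicator {0<..} a * (a powr (\<alpha>-1) * (sqrt (pi/(a+b)) * exp (-(t\<^sup>2)/(4*(a+b))))) \<partial>lborel)) \<partial>lborel)
      = (\<integral>b. t powr (2*\<alpha>-1) * (indicator {0<..} b * (b powr (\<beta>-1) * exp (-b) * phi \<alpha> (b/t\<^sup>2))) \<partial>lborel)"
    proof (rule Bochner_Integration.integral_cong[OF refl])
      fix b :: real
      show "indicator {0<..} b * (b powr (\<beta>-1) * exp (-b) *
        (\<integral>a. indicator {0<..} a * (a powr (\<alpha>-1) * (sqrt (pi/(a+b)) * exp (-(t\<^sup>2)/(4*(a+b))))) \<partial>lborel))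
        = t powr (2*\<alpha>-1) * (indicator {0<..} b * (b powr (\<beta>-1) * exp (-b) * phi \<alpha> (b/t\<^sup>2)))"
      proof (cases "b > 0")
        case True
        thus ?thesis using Phi_scale[OF t, of b \<alpha>] by (simp add: mult_ac)
      qed simp
    qed
    also have "\<dots> = t powr (2*\<alpha>-1) * Q t" unfolding Q_def by simp
    finally show ?thesis using stepA[OF assms, of t] by simp
  qed
  have Qlim: "(Q \<longlongrightarrow> Gamma \<beta> * P0) at_top"
  proof -
    have gb: "has_bochner_integral lborel (\<lambda>b. indicator {0<..} b * (b powr (\<beta>-1) * exp (-(1*b)))) (Gamma \<beta> * 1 powr (-\<beta>))"
      by (rule gamma_lborel) (use assms in auto)
    hence gbi: "integrable lborel (\<lambda>b. indicator {0<..} b * (b powr (\<beta>-1) * exp (-b)))"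
      and gbv: "(\<integral>b. indicator {0<..} b * (b powr (\<beta>-1) * exp (-b)) \<partial>lborel) = Gamma \<beta>"
      by (auto simp: has_bochner_integral_iff)
    have lim: "((\<lambda>t. \<integral>b. indicator {0<..} b * (b powr (\<beta>-1) * exp (-b) * phi \<alpha> (b/t\<^sup>2)) \<partial>lborel)
        \<longlongrightarrow> (\<integral>b. indicator {0<..} b * (b powr (\<beta>-1) * exp (-b) * phi \<alpha> 0) \<partial>lborel)) at_top"
    proof (rule integral_dominated_convergence_at_top[where w="\<lambda>b. Mw * (indicator {0<..} b * (b powr (\<beta>-1) * exp (-b)))"])
      show "(\<lambda>b. indicator {0<..} b * (b powr (\<beta>-1) * exp (-b) * phi \<alpha> 0)) \<in> borel_measurable lborel"
        by measurable
      show "(\<lambda>b. indicator {0<..} b * (b powr (\<beta>-1) * exp (-b) * phi \<alpha> (b/t\<^sup>2))) \<in> borel_measurable lborel" for t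
        by measurable
      show "integrable lborel (\<lambda>b. Mw * (indicator {0<..} b * (b powr (\<beta>-1) * exp (-b))))"
        using gbi by simp
      show "AE b in lborel. ((\<lambda>t. indicator {0<..} b * (b powr (\<beta>-1) * exp (-b) * phi \<alpha> (b/t\<^sup>2)))
              \<longlongrightarrow> indicator {0<..} b * (b powr (\<beta>-1) * exp (-b) * phi \<alpha> 0)) at_top"
      proof (rule AE_I2)
        fix b :: real
        show "((\<lambda>t. indicator {0<..} b * (b powr (\<beta>-1) * exp (-b) * phi \<alpha> (b/t\<^sup>2)))
              \<longlongrightarrow> indicator {0<..} b * (b powr (\<beta>-1) * exp (-b) * phi \<alpha> 0)) at_top"
        proof (cases "b > 0")
          case True
          show ?thesis by (intro tendsto_intros phi_tendsto a) (use True in simp)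
        qed simp
      qed
      show "\<forall>\<^sub>F t in at_top. AE b in lborel. norm (indicator {0<..} b * (b powr (\<beta>-1) * exp (-b) * phi \<alpha> (b/t\<^sup>2)))
              \<le> Mw * (indicator {0<..} b * (b powr (\<beta>-1) * exp (-b)))"
      proof (intro always_eventually allI AE_I2)
        fix t b :: real
        show "norm (indicator {0<..} b * (b powr (\<beta>-1) * exp (-b) * phi \<alpha> (b/t\<^sup>2)))
              \<le> Mw * (indicator {0<..} b * (b powr (\<beta>-1) * exp (-b)))"
        proof (cases "b > 0")
          case True
          have e: "b/t\<^sup>2 \<ge> 0" using True by simp
          have p1: "0 \<le> phi \<alpha> (b/t\<^sup>2)" "phi \<alpha> (b/t\<^sup>2) \<le> Mw"
            using phi_bounds[OF a e] unfolding Mw_def by auto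
          have p2: "0 \<le> b powr (\<beta>-1) * exp (-b)" by simp
          have "\<bar>b powr (\<beta>-1) * exp (-b) * phi \<alpha> (b/t\<^sup>2)\<bar> = b powr (\<beta>-1) * exp (-b) * phi \<alpha> (b/t\<^sup>2)"
            using p1 p2 by simp
          also have "\<dots> \<le> b powr (\<beta>-1) * exp (-b) * Mw" using p1 p2 by (intro mult_left_mono) auto
          finally show ?thesis using True by (simp add: mult_ac)
        qed simp
      qed
    qed
    have "(\<integral>b. indicator {0<..} b * (b powr (\<beta>-1) * exp (-b) * phi \<alpha> 0) \<partial>lborel)
        = (\<integral>b. phi \<alpha> 0 * (indicator {0<..} b * (b powr (\<beta>-1) * exp (-b))) \<partial>lborel)"
      by (simp add: mult_ac)
    also have "\<dots> = Gamma \<beta> * P0" using gbv phi0v by simp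
    finally show ?thesis using lim unfolding Q_def by simp
  qed
  have ratio: "\<forall>\<^sub>F t in at_top. cov_fun C \<alpha> \<beta> t / complex_of_real (t powr (2 * \<alpha> - 1) * K)
      = complex_of_real (C/(Gamma \<alpha> * Gamma \<beta>) * Q t / K)"
    using eventually_gt_at_top[of 0]
  proof eventually_elim
    case (elim t)
    have "t powr (2*\<alpha>-1) > 0" using elim by simp
    thus ?case using cov_eq[OF elim] Kpos by (simp add: field_simps)
  qed
  have "((\<lambda>t. complex_of_real (C/(Gamma \<alpha> * Gamma \<beta>) * Q t / K)) \<longlongrightarrow>
          complex_of_real (C/(Gamma \<alpha> * Gamma \<beta>) * (Gamma \<beta> * P0) / K)) at_top"
    by (intro tendsto_intros Qlim) (use Kpos in simp)
  moreover have "C/(Gamma \<alpha> * Gamma \<beta>) * (Gamma \<beta> * P0) / K = 1"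
  proof -
    have id: "P0 * cos (pi*\<alpha>) * Gamma (2*\<alpha>) = pi * Gamma \<alpha>"
      using gamma_const[OF a] unfolding P0_def by (simp add: mult_ac)
    show ?thesis unfolding K_def using Ga Gb G2a cpos assms(1) id
      by (simp add: field_simps)
  qed
  ultimately have "((\<lambda>t. cov_fun C \<alpha> \<beta> t / complex_of_real (t powr (2 * \<alpha> - 1) * K)) \<longlongrightarrow> 1) at_top"
    using tendsto_cong[OF ratio] by simp
  thus ?thesis unfolding K_def by (rule asymp_equivI')
qed


end
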